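(* Let $n,m\in\mathbb{N}$, $\nu\ge 0$, and let $f_n$, $g_m$ be polynomials of degree at most $n$ and $m$, respectively. If $$f_n(x)\rho_\nu(x)+g_m(x)\rho_{\nu+1}(x)=0\quad\text{for all } x>0,$$ then $f_n\equiv 0$ and $g_m\equiv 0$.
   Context: For $\nu\in\mathbb{R}$ and $x>0$, $\rho_\nu(x)=2x^{\nu/2}K_\nu(2\sqrt{x})$ is the scaled Macdonald function, where $K_\nu$ is the modified Bessel function of the second kind. Equivalently, $\rho_\nu(x)=\int_0^\infty t^{\nu-1}e^{-t-x/t}\,dt$. *)

theory Defs
  imports "HOL-Analysis.Analysis" "HOL-Computational_Algebra.Polynomial"
begin

text \<open>Scaled Macdonald function, via its integral representation
  rho_nu(x) = int_0^infty t^(nu-1) exp(-t - x/t) dt  (x > 0).\<close>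
definition rho :: "real \<Rightarrow> real \<Rightarrow> real" where
  "rho \<nu> x = (LBINT t:{0<..}. t powr (\<nu> - 1) * exp (- t - x / t))"

end

theory Submission imports Defs "HOL-Real_Asymp.Real_Asymp" begin

lemma int_gamma:
  fixes c :: real assumes "c > -1"
  shows "set_integrable lborel {0<..} (\<lambda>t. t powr c * exp (-t))"
proof -
  have "((\<lambda>t. t powr c / exp t) has_integral Gamma (c+1)) {0..}"
    using Gamma_integral_real[of "c+1"] assms by simp
  hence "(\<lambda>t. t powr c / exp t) integrable_on {0..}" by blast
  hence "(\<lambda>t. t powr c / exp t) integrable_on {0<..}"
    by (rule integrable_spike_set) (auto intro: negligible_subset[of "{0}"])
  hence "(\<lambda>t. t powr c / exp t) absolutely_integrable_on {0<..}"
    by (rule nonnegative_absolutely_integrable_1) auto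
  hence "set_integrable lebesgue {0<..} (\<lambda>t. t powr c * exp (-t))"
    by (simp add: exp_minus field_simps)
  thus ?thesis unfolding set_integrable_def
    by (subst (asm) integrable_completion)
       (auto intro!: borel_measurable_continuous_on_indicator continuous_intros)
qed

lemma exp_bound:
  fixes x t s :: real assumes "x > 0" "t > 0" "s > 0"
  shows "exp (- x / t) \<le> (s / x) powr s * t powr s"
proof -
  define u where "u = x / t"
  have u: "u > 0" using assms by (simp add: u_def)
  have "(u / s) powr s \<le> exp (u / s) powr s"
    using u assms by (intro powr_mono2) (auto intro: order_trans[OF _ exp_ge_add_one_self] )
  also have "\<dots> = exp u" using assms by (simp add: powr_def)
  finally have 1: "(u / s) powr s \<le> exp u" .
  have pos: "(u / s) powr s > 0" using u assms by simp
  have "exp (- x / t) = 1 / exp u" by (simp add: u_def exp_minus field_simps)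
  also have "\<dots> \<le> 1 / (u / s) powr s" using 1 pos by (intro divide_left_mono) auto
  also have "\<dots> = (s / u) powr s" using u assms by (simp add: powr_divide)
  also have "s / u = (s / x) * t" using assms by (simp add: u_def field_simps)
  also have "((s / x) * t) powr s = (s / x) powr s * t powr s" using powr_mult[of "s/x" t s] assms by simp
  finally show ?thesis .
qed

definition hh :: "real \<Rightarrow> real \<Rightarrow> real \<Rightarrow> real" where
  "hh a x t = t powr (a - 1) * exp (- t - x / t)"

lemma rho_hh: "rho a x = (LBINT t:{0<..}. hh a x t)"
  by (simp add: rho_def hh_def)

lemma hh_integrable:
  assumes "x > 0"
  shows "set_integrable lborel {0<..} (hh a x)"
proof -
  define s where "s = \<bar>a - 1\<bar> + 1"
  have s: "s > 0" "a - 1 + s > -1" by (auto simp: s_def)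
  have I: "set_integrable lborel {0<..} (\<lambda>t. (s / x) powr s * (t powr (a - 1 + s) * exp (-t)))"
    using int_gamma[OF s(2)] by (rule set_integrable_mult_right)
  show ?thesis
  proof (rule set_integrable_bound[OF I])
    show "set_borel_measurable lborel {0<..} (hh a x)"
      unfolding set_borel_measurable_def hh_def measurable_lborel2
      by (intro borel_measurable_continuous_on_indicator) (auto intro!: continuous_intros)
    show "AE t in lborel. t \<in> {0<..} \<longrightarrow> norm (hh a x t) \<le> norm ((s / x) powr s * (t powr (a - 1 + s) * exp (-t)))"
    proof (intro AE_I2 impI)
      fix t :: real assume t: "t \<in> {0<..}"
      hence t0: "t > 0" by simp
      have "hh a x t = t powr (a - 1) * exp (-t) * exp (- x / t)"
        by (simp add: hh_def exp_add[symmetric] exp_diff exp_minus field_simps)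
      also have "\<dots> \<le> t powr (a - 1) * exp (-t) * ((s / x) powr s * t powr s)"
        using exp_bound[OF assms t0 s(1)] t0 by (intro mult_left_mono) auto
      also have "\<dots> = (s / x) powr s * (t powr (a - 1 + s) * exp (-t))"
        using t0 by (simp add: powr_add)
      finally show "norm (hh a x t) \<le> norm ((s / x) powr s * (t powr (a - 1 + s) * exp (-t)))"
        using t0 assms s by (simp add: hh_def)
    qed
  qed
qed

lemma hh_pos: "x > 0 \<Longrightarrow> t > 0 \<Longrightarrow> hh a x t > 0"
  by (simp add: hh_def)

lemma rho_pos:
  assumes "x > 0"
  shows "rho a x > 0"
proof -
  let ?f = "\<lambda>t. indicator {0<..} t *\<^sub>R hh a x t"
  have int: "integrable lborel ?f"
    using hh_integrable[OF assms] by (simp add: set_integrable_def)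
  have nn: "AE t in lborel. 0 \<le> ?f t"
    using assms by (intro AE_I2) (auto simp: indicator_def hh_pos less_imp_le)
  have ge: "integral\<^sup>L lborel ?f \<ge> 0"
    using nn by (intro integral_nonneg_AE) 
  have ne: "integral\<^sup>L lborel ?f \<noteq> 0"
  proof
    assume "integral\<^sup>L lborel ?f = 0"
    hence "AE t in lborel. ?f t = 0"
      using integral_nonneg_eq_0_iff_AE[OF int nn] by simp
    moreover have key: "\<And>t. ?f t = 0 \<Longrightarrow> t \<notin> {1..2::real}"
    proof
      fix t :: real assume "?f t = 0" "t \<in> {1..2}"
      thus False using hh_pos[OF assms, of t a] by (auto simp: indicator_def)
    qed
    ultimately have "AE t in lborel. t \<notin> {1..2::real}"
      by (rule eventually_mono)
    hence "emeasure lborel {1..2::real} = 0"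
      by (subst (asm) AE_iff_measurable[of "{1..2}"]) auto
    thus False by simp
  qed
  show ?thesis using ge ne by (simp add: rho_hh set_lebesgue_integral_def)
qed

lemma lim0: fixes a x :: real assumes "x > 0"
  shows "((\<lambda>t. t powr a * exp (- t - x / t)) \<longlongrightarrow> 0) (at_right 0)"
  using assms by real_asymp

lemma limtop: fixes a x :: real assumes "x > 0"
  shows "((\<lambda>t. t powr a * exp (- t - x / t)) \<longlongrightarrow> 0) at_top"
  using assms by real_asymp

lemma rho_rec:
  assumes x: "x > 0"
  shows "rho (a + 1) x = a * rho a x + x * rho (a - 1) x"
proof -
  define F where "F t = t powr a * exp (- t - x / t)" for t
  define f where "f t = a * hh a x t - hh (a + 1) x t + x * hh (a - 1) x t" for t
  have I: "set_integrable lborel {0<..} f"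
    unfolding f_def using hh_integrable[OF x]
    by (intro set_integral_add set_integral_diff set_integrable_mult_right) auto
  have "(LBINT t=ereal 0..\<infinity>. f t) = 0 - 0"
  proof (rule interval_integral_FTC_integrable)
    fix t assume "ereal 0 < ereal t" "ereal t < \<infinity>"
    hence t: "t > 0" by simp
    have "(F has_real_derivative f t) (at t)"
      unfolding F_def f_def hh_def
      using t
      apply (auto intro!: derivative_eq_intros)
      apply (subgoal_tac "t powr (a - 2) = t powr a / (t * t)")
       apply (simp add: field_simps)
      apply (simp add: powr_diff powr_numeral power2_eq_square)
      done
    thus "(F has_vector_derivative f t) (at t)"
      by (simp add: has_real_derivative_iff_has_vector_derivative)
    show "isCont f t" unfolding f_def hh_def using t by (auto intro!: continuous_intros)
  next
    show "set_integrable lborel (einterval (ereal 0) \<infinity>) f" using I by simp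
    show "((F \<circ> real_of_ereal) \<longlongrightarrow> 0) (at_right (ereal 0))"
      unfolding ereal_tendsto_simps1 F_def using lim0[OF x] .
    show "((F \<circ> real_of_ereal) \<longlongrightarrow> 0) (at_left \<infinity>)"
      unfolding ereal_tendsto_simps1 F_def using limtop[OF x] .
  qed simp
  hence "(LBINT t:{0<..}. f t) = 0"
    by (simp add: interval_lebesgue_integral_def)
  also have "(LBINT t:{0<..}. f t) = a * rho a x - rho (a + 1) x + x * rho (a - 1) x"
    unfolding f_def rho_hh using hh_integrable[OF x]
    by (subst set_integral_add set_integral_diff; (intro set_integral_add set_integral_diff set_integrable_mult_right)?; auto)+
  finally show ?thesis by simp
qed

lemma exp_diff_bound:
  fixes p q m :: real assumes "m \<le> p" "m \<le> q"
  shows "\<bar>exp (-p) - exp (-q)\<bar> \<le> \<bar>p - q\<bar> * exp (-m)"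
proof -
  have *: "exp (-p) - exp (-q) \<le> (q - p) * exp (-m)" if "m \<le> p" "p \<le> q" for p q :: real
  proof -
    have e: "exp (-p) * exp (p - q) = exp (-q)" by (simp add: exp_add[symmetric])
    have "exp (-p) - exp (-q) = exp (-p) * (1 - exp (-(q - p)))"
      by (simp add: right_diff_distrib e)
    also have "\<dots> \<le> exp (-p) * (q - p)"
    proof (rule mult_left_mono)
      show "1 - exp (-(q - p)) \<le> q - p" using exp_ge_add_one_self[of "p-q"] by (subst minus_diff_eq) linarith
    qed simp
    also have "\<dots> \<le> exp (-m) * (q - p)" using that by (intro mult_right_mono) auto
    finally show ?thesis by (simp add: mult.commute)
  qed
  show ?thesis
  proof (cases "p \<le> q")
    case True
    thus ?thesis using *[of p q] assms by (simp add: abs_if)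
  next
    case False
    thus ?thesis using *[of q p] assms by (simp add: abs_if)
  qed
qed

lemma rho_deriv:
  assumes x: "x > 0"
  shows "(rho a has_real_derivative - rho (a - 1) x) (at x)"
proof -
  define x0 where "x0 = x / 2"
  have x0: "x0 > 0" "x0 < x" using x by (auto simp: x0_def)
  have "((\<lambda>y. (rho a y - rho a x) / (y - x)) \<longlongrightarrow> - rho (a - 1) x) (at x within {x0<..})"
  proof (subst tendsto_at_iff_sequentially, intro allI impI)
    fix X :: "nat \<Rightarrow> real"
    assume XS: "\<forall>i. X i \<in> {x0<..} - {x}" and Xl: "X \<longlonglongrightarrow> x"
    have Xp: "X i > x0" "X i \<noteq> x" for i using XS by auto
    define q where "q i t = (hh a (X i) t - hh a x t) / (X i - x)" for i t
    have eq: "(rho a (X i) - rho a x) / (X i - x) = (LBINT t:{0<..}. q i t)" for i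
    proof -
      have "rho a (X i) - rho a x = (LBINT t:{0<..}. hh a (X i) t - hh a x t)"
        unfolding rho_hh using hh_integrable[OF x] hh_integrable[of "X i" a] Xp[of i] x0
        by (subst set_integral_diff) auto
      thus ?thesis unfolding q_def by simp
    qed
    have w: "integrable lborel (\<lambda>t. indicator {0<..} t *\<^sub>R hh (a - 1) x0 t)"
      using hh_integrable[OF x0(1)] by (simp add: set_integrable_def)
    have lim: "(\<lambda>i. integral\<^sup>L lborel (\<lambda>t. indicator {0<..} t *\<^sub>R q i t))
       \<longlonglongrightarrow> integral\<^sup>L lborel (\<lambda>t. indicator {0<..} t *\<^sub>R (- hh (a - 1) x t))"
    proof (rule integral_dominated_convergence[OF _ _ w])
      show "(\<lambda>t. indicator {0<..} t *\<^sub>R (- hh (a - 1) x t)) \<in> borel_measurable lborel"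
        unfolding hh_def measurable_lborel2
        by (intro borel_measurable_continuous_on_indicator) (auto intro!: continuous_intros)
      show "(\<lambda>t. indicator {0<..} t *\<^sub>R q i t) \<in> borel_measurable lborel" for i
        unfolding hh_def q_def measurable_lborel2 using Xp[of i]
        by (intro borel_measurable_continuous_on_indicator) (auto intro!: continuous_intros)
      show "AE t in lborel. (\<lambda>i. indicator {0<..} t *\<^sub>R q i t) \<longlonglongrightarrow> indicator {0<..} t *\<^sub>R (- hh (a - 1) x t)"
      proof (rule AE_I2)
        fix t :: real
        show "(\<lambda>i. indicator {0<..} t *\<^sub>R q i t) \<longlonglongrightarrow> indicator {0<..} t *\<^sub>R (- hh (a - 1) x t)"
        proof (cases "t > 0")
          case False thus ?thesis by (simp add: indicator_def)
        next
          case t: True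
          have D: "((\<lambda>u. exp (- t - u / t)) has_real_derivative (- exp (- t - x / t) / t)) (at x)"
            using t by (auto intro!: derivative_eq_intros simp: power2_eq_square)
          hence "((\<lambda>u. (exp (- t - u / t) - exp (- t - x / t)) / (u - x)) \<longlongrightarrow> (- exp (- t - x / t) / t)) (at x)"
            by (simp add: has_field_derivative_iff)
          hence "((\<lambda>u. (exp (- t - u / t) - exp (- t - x / t)) / (u - x)) \<circ> X) \<longlonglongrightarrow> (- exp (- t - x / t) / t)"
            using XS Xl by (subst (asm) tendsto_at_iff_sequentially) auto
          hence "(\<lambda>i. t powr (a - 1) * ((exp (- t - X i / t) - exp (- t - x / t)) / (X i - x))) \<longlonglongrightarrow> t powr (a - 1) * (- exp (- t - x / t) / t)"
            by (intro tendsto_mult tendsto_const) (simp add: o_def)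
          moreover have "t powr (a - 1) * ((exp (- t - X i / t) - exp (- t - x / t)) / (X i - x)) = q i t" for i
            by (simp add: q_def hh_def field_simps)
          moreover have "t powr (a - 1) * (- exp (- t - x / t) / t) = - hh (a - 1) x t"
            using t by (simp add: hh_def powr_diff field_simps power2_eq_square)
          ultimately show ?thesis using t by (simp add: indicator_def)
        qed
      qed
      show "AE t in lborel. norm (indicator {0<..} t *\<^sub>R q i t) \<le> indicator {0<..} t *\<^sub>R hh (a - 1) x0 t" for i
      proof (rule AE_I2)
        fix t :: real
        show "norm (indicator {0<..} t *\<^sub>R q i t) \<le> indicator {0<..} t *\<^sub>R hh (a - 1) x0 t"
        proof (cases "t > 0")
          case False thus ?thesis by (simp add: indicator_def)
        next
          case t: True
          have b: "\<bar>exp (- (X i / t)) - exp (- (x / t))\<bar> \<le> \<bar>X i / t - x / t\<bar> * exp (- (x0 / t))"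
            using Xp[of i] x0 t by (intro exp_diff_bound) (auto intro: divide_right_mono)
          have "\<bar>X i / t - x / t\<bar> = \<bar>X i - x\<bar> / t" using t by (simp add: diff_divide_distrib[symmetric])
          with b have b2: "\<bar>exp (- (X i / t)) - exp (- (x / t))\<bar> / \<bar>X i - x\<bar> \<le> exp (- (x0 / t)) / t"
            using Xp[of i] t by (simp add: field_simps)
          have "q i t = t powr (a - 1) * exp (-t) * ((exp (- (X i / t)) - exp (- (x / t))) / (X i - x))"
            by (simp add: q_def hh_def exp_diff exp_minus field_simps)
          hence "\<bar>q i t\<bar> = t powr (a - 1) * exp (-t) * (\<bar>exp (- (X i / t)) - exp (- (x / t))\<bar> / \<bar>X i - x\<bar>)"
            by (simp add: abs_mult)
          also have "\<dots> \<le> t powr (a - 1) * exp (-t) * (exp (- (x0 / t)) / t)"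
            using b2 by (intro mult_left_mono) auto
          also have "\<dots> = hh (a - 1) x0 t"
          proof -
            have 1: "t powr (a - 1 - 1) = t powr (a - 1) / t" using t by (simp add: powr_diff power2_eq_square)
            have 2: "exp (- t - x0 / t) = exp (-t) * exp (-(x0/t))" by (simp add: exp_add[symmetric])
            show ?thesis unfolding hh_def 1 2 by simp
          qed
          finally show ?thesis using t by (simp add: indicator_def)
        qed
      qed
    qed
    show "((\<lambda>y. (rho a y - rho a x) / (y - x)) \<circ> X) \<longlonglongrightarrow> - rho (a - 1) x"
    proof -
      have L: "(\<lambda>i. LBINT t:{0<..}. q i t) \<longlonglongrightarrow> - rho (a - 1) x"
        using lim by (simp add: rho_hh set_lebesgue_integral_def)
      show ?thesis unfolding o_def eq using L .
    qed
  qed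
  moreover have "at x within {x0<..} = at x" using x0 by (intro at_within_open) auto
  ultimately show ?thesis by (simp add: has_field_derivative_iff)
qed

lemma poly_pos_zero:
  fixes p :: "real poly"
  assumes "\<forall>x>0. poly p x = 0" shows "p = 0"
proof (rule ccontr)
  assume "p \<noteq> 0"
  hence "finite {x. poly p x = 0}" by (rule poly_roots_finite)
  moreover have "{0<..} \<subseteq> {x. poly p x = 0}" using assms by auto
  ultimately show False using infinite_Ioi[of "0::real"] finite_subset by blast
qed

lemma deg_aux:
  fixes p q :: "real poly"
  shows "degree (pCons 0 (pderiv p * q)) \<le> degree p + degree q"
proof (cases "pderiv p * q = 0")
  case True thus ?thesis by simp
next
  case False
  hence "pderiv p \<noteq> 0" by auto
  hence "degree p \<ge> 1" by (simp add: pderiv_eq_0_iff)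
  have "degree (pCons 0 (pderiv p * q)) \<le> Suc (degree (pderiv p * q))" by (rule degree_pCons_le)
  also have "degree (pderiv p * q) \<le> degree (pderiv p) + degree q" by (rule degree_mult_le)
  finally show ?thesis using \<open>degree p \<ge> 1\<close> by (simp add: degree_pderiv)
qed

theorem lemma1:
  fixes n m :: nat and \<nu> :: real and f g :: "real poly"
  assumes "\<nu> \<ge> 0"
    and "degree f \<le> n" and "degree g \<le> m"
    and "\<forall>x>0. poly f x * rho \<nu> x + poly g x * rho (\<nu> + 1) x = 0"
  shows "f = 0 \<and> g = 0"
proof -
  note H = assms(4)
  define Q where "Q = pCons 0 (pderiv f * g) + smult \<nu> (f * g) - pCons 0 (g * g) - pCons 0 (pderiv g * f) + f * f"
  have Qx: "poly Q x = 0" if x: "x > 0" for x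
  proof -
    define \<phi> where "\<phi> y = poly f y * rho \<nu> y + poly g y * rho (\<nu> + 1) y" for y
    define D where "D = poly (pderiv f) x * rho \<nu> x + poly f x * (- rho (\<nu> - 1) x)
       + (poly (pderiv g) x * rho (\<nu> + 1) x + poly g x * (- rho \<nu> x))"
    have a1: "((\<lambda>z. poly f z * rho \<nu> z) has_real_derivative poly (pderiv f) x * rho \<nu> x + poly f x * (- rho (\<nu> - 1) x)) (at x)"
      using DERIV_mult[OF poly_DERIV[of f x] rho_deriv[OF x, of \<nu>]] by (simp add: algebra_simps)
    have a2: "((\<lambda>z. poly g z * rho (\<nu> + 1) z) has_real_derivative poly (pderiv g) x * rho (\<nu> + 1) x + poly g x * (- rho \<nu> x)) (at x)"
      using DERIV_mult[OF poly_DERIV[of g x] rho_deriv[OF x, of "\<nu> + 1"]] by (simp add: algebra_simps)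
    have d1: "(\<phi> has_real_derivative D) (at x)"
      unfolding \<phi>_def D_def by (rule DERIV_add[OF a1 a2])
    have d0: "(\<phi> has_real_derivative 0) (at x)"
      by (rule has_field_derivative_transform_within_open[of "\<lambda>_. 0" 0 x "{0<..}"])
         (use x H in \<open>auto simp: \<phi>_def\<close>)
    have D0: "D = 0" using DERIV_unique[OF d1 d0] .
    define R0 where "R0 = rho \<nu> x"
    define R1 where "R1 = rho (\<nu> + 1) x"
    define Rm where "Rm = rho (\<nu> - 1) x"
    define F where "F = poly f x"
    define G where "G = poly g x"
    define F' where "F' = poly (pderiv f) x"
    define G' where "G' = poly (pderiv g) x"
    have E1: "F * R0 + G * R1 = 0" using H x by (simp add: F_def G_def R0_def R1_def)
    have E2: "R1 - \<nu> * R0 - x * Rm = 0" using rho_rec[OF x, of \<nu>] by (simp add: R0_def R1_def Rm_def)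
    have E3: "F' * R0 - F * Rm + G' * R1 - G * R0 = 0"
      using D0 by (simp add: D_def F_def G_def F'_def G'_def R0_def R1_def Rm_def)
    have PQ: "poly Q x = x * F' * G + \<nu> * F * G - x * G * G - x * G' * F + F * F"
      by (simp add: Q_def F_def G_def F'_def G'_def)
    have "poly Q x * R0 = G * x * (F' * R0 - F * Rm + G' * R1 - G * R0)
       + (F - x * G') * (F * R0 + G * R1) - F * G * (R1 - \<nu> * R0 - x * Rm)"
      unfolding PQ by (simp add: algebra_simps)
    hence "poly Q x * R0 = 0" using E1 E2 E3 by simp
    moreover have "R0 > 0" unfolding R0_def using rho_pos[OF x] .
    ultimately show ?thesis by simp
  qed
  hence Q0: "Q = 0" by (intro poly_pos_zero) auto
  show ?thesis
  proof (cases "f = 0 \<or> g = 0")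
    case True
    thus ?thesis
    proof
      assume f0: "f = 0"
      have "\<forall>x>0. poly g x = 0"
      proof (intro allI impI)
        fix x :: real assume x: "x > 0"
        thus "poly g x = 0" using H rho_pos[OF x, of "\<nu> + 1"] f0 by auto
      qed
      thus ?thesis using f0 poly_pos_zero by blast
    next
      assume g0: "g = 0"
      have "\<forall>x>0. poly f x = 0"
      proof (intro allI impI)
        fix x :: real assume x: "x > 0"
        thus "poly f x = 0" using H rho_pos[OF x, of \<nu>] g0 by auto
      qed
      thus ?thesis using g0 poly_pos_zero by blast
    qed
  next
    case False
    hence f0: "f \<noteq> 0" and g0: "g \<noteq> 0" by auto
    define a where "a = degree f"
    define b where "b = degree g"
    have dA: "degree (pCons 0 (pderiv f * g)) \<le> a + b" using deg_aux[of f g] by (simp add: a_def b_def)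
    have dB: "degree (pCons 0 (pderiv g * f)) \<le> a + b" using deg_aux[of g f] by (simp add: a_def b_def)
    have dC: "degree (smult \<nu> (f * g)) \<le> a + b"
      using degree_smult_le[of \<nu> "f * g"] degree_mult_le[of f g] by (simp add: a_def b_def)
    have dD: "degree (pCons 0 (g * g)) \<le> Suc (b + b)"
      using degree_pCons_le[of 0 "g * g"] degree_mult_le[of g g] by (simp add: b_def)
    have dE: "degree (f * f) \<le> a + a" using degree_mult_le[of f f] by (simp add: a_def)
    have lcf: "lead_coeff f \<noteq> 0" and lcg: "lead_coeff g \<noteq> 0" using f0 g0 by auto
    show ?thesis
    proof (cases "b < a")
      case True
      have c1: "coeff (pCons 0 (pderiv f * g)) (a + a) = 0" using dA True by (intro coeff_eq_0) linarith
      have c2: "coeff (pCons 0 (pderiv g * f)) (a + a) = 0" using dB True by (intro coeff_eq_0) linarith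
      have c3: "coeff (smult \<nu> (f * g)) (a + a) = 0" using dC True by (intro coeff_eq_0) linarith
      have c4: "coeff (pCons 0 (g * g)) (a + a) = 0" using dD True by (intro coeff_eq_0) linarith
      have "coeff Q (a + a) = coeff (f * f) (a + a)"
        unfolding Q_def coeff_add coeff_diff c1 c2 c3 c4 by simp
      also have "\<dots> = lead_coeff f * lead_coeff f" unfolding a_def by (rule coeff_mult_degree_sum)
      finally have "coeff Q (a + a) \<noteq> 0" using lcf by simp
      thus ?thesis using Q0 by simp
    next
      case False
      have c1: "coeff (pCons 0 (pderiv f * g)) (Suc (b + b)) = 0" using dA False by (intro coeff_eq_0) linarith
      have c2: "coeff (pCons 0 (pderiv g * f)) (Suc (b + b)) = 0" using dB False by (intro coeff_eq_0) linarith
      have c3: "coeff (smult \<nu> (f * g)) (Suc (b + b)) = 0" using dC False by (intro coeff_eq_0) linarith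
      have c4: "coeff (f * f) (Suc (b + b)) = 0" using dE False by (intro coeff_eq_0) linarith
      have "coeff Q (Suc (b + b)) = - coeff (pCons 0 (g * g)) (Suc (b + b))"
        unfolding Q_def coeff_add coeff_diff c1 c2 c3 c4 by simp
      also have "\<dots> = - (lead_coeff g * lead_coeff g)" unfolding b_def
        by (simp add: coeff_mult_degree_sum)
      finally have "coeff Q (Suc (b + b)) \<noteq> 0" using lcg by simp
      thus ?thesis using Q0 by simp
    qed
  qed
qed

end
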